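(* Let $\rho$ be a growth function, $m\ge1$ and $0\le k\le m$ integers, and $\sigma\in\{-1,1\}^m$ with $|\sigma|=k$. Define $\theta\in\{-1,1\}^m$ by $\theta_i=1$ for $1\le i\le k$ and $\theta_i=-1$ for $k+1\le i\le m$. If $f^\rho_\sigma=(a_\sigma,b_\sigma)$ and $f^\rho_\theta=(a_\theta,b_\theta)$, then $a_\sigma\le a_\theta$ and $b_\sigma=b_\theta$.
   Context: A growth function is an increasing $\rho:\mathbb{R}\to\mathbb{R}^{\ge0}$. Binary strings are elements of $\{-1,1\}^m$ (the empty string $<>$ for $m=0$); $|\sigma|$ is the number of coordinates equal to $1$; $\sigma\wedge u$ denotes concatenation. $f^\rho_\sigma\in\mathbb{R}^2$ is defined recursively: $f^\rho_{<>}=(0,0)$, and if $f^\rho_\sigma=(a,b)$ then $f^\rho_{\sigma\wedge1}=(a+1,b+1)$ and $f^\rho_{\sigma\wedge-1}=(a+\rho(a+b),b-1)$. *)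

theory Defs
  imports Complex_Main
begin

definition growth_function :: "(real \<Rightarrow> real) \<Rightarrow> bool" where
  "growth_function \<rho> \<longleftrightarrow> mono \<rho> \<and> (\<forall>x. 0 \<le> \<rho> x)"

text \<open>Binary strings: lists over {-1,1}; the list head is coordinate 1.\<close>
definition binary_string :: "int list \<Rightarrow> bool" where
  "binary_string \<sigma> \<longleftrightarrow> set \<sigma> \<subseteq> {-1, 1}"

definition ones :: "int list \<Rightarrow> nat" where
  "ones \<sigma> = length (filter (\<lambda>x. x = 1) \<sigma>)"

definition fstep :: "(real \<Rightarrow> real) \<Rightarrow> real \<times> real \<Rightarrow> int \<Rightarrow> real \<times> real" where
  "fstep \<rho> p u = (case p of (a, b) \<Rightarrow>
     if u = 1 then (a + 1, b + 1) else (a + \<rho> (a + b), b - 1))"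

definition f_rho :: "(real \<Rightarrow> real) \<Rightarrow> int list \<Rightarrow> real \<times> real" where
  "f_rho \<rho> \<sigma> = foldl (fstep \<rho>) (0, 0) \<sigma>"

lemma f_rho_Nil: "f_rho \<rho> [] = (0, 0)"
  by (simp add: f_rho_def)

lemma f_rho_snoc: "f_rho \<rho> (\<sigma> @ [u]) = fstep \<rho> (f_rho \<rho> \<sigma>) u"
  by (simp add: f_rho_def)

end

theory Submission
  imports Defs
begin

lemma F_mono:
  assumes "mono \<rho>"
  shows "a \<le> a' \<Longrightarrow> fst (foldl (fstep \<rho>) (a,b) s) \<le> fst (foldl (fstep \<rho>) (a',b) s)
     \<and> snd (foldl (fstep \<rho>) (a,b) s) = snd (foldl (fstep \<rho>) (a',b) s)"
proof (induction s arbitrary: a a' b)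
  case Nil then show ?case by simp
next
  case (Cons u s)
  have "\<rho> (a+b) \<le> \<rho> (a'+b)" using Cons.prems assms by (simp add: monoD)
  then show ?case using Cons by (auto simp: fstep_def)
qed

lemma F_ones: "foldl (fstep \<rho>) (a,b) (replicate k 1) = (a + real k, b + real k)"
  by (induction k arbitrary: a b) (auto simp: fstep_def algebra_simps)

lemma F_ones_snoc: "foldl (fstep \<rho>) p (replicate k 1 @ s) = foldl (fstep \<rho>) (fst p + real k, snd p + real k) s"
  by (cases p) (simp add: F_ones)

lemma all_neg: "set s \<subseteq> {-1,1} \<Longrightarrow> ones s = 0 \<Longrightarrow> s = replicate (length s) (-1)"
  by (induction s) (auto simp: ones_def)

lemma main_gen:
  assumes "growth_function \<rho>"
  shows "set s \<subseteq> {-1,1} \<Longrightarrow> ones s = k \<Longrightarrow>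
    fst (foldl (fstep \<rho>) p s) \<le> fst (foldl (fstep \<rho>) p (replicate k 1 @ replicate (length s - k) (-1)))
  \<and> snd (foldl (fstep \<rho>) p s) = snd (foldl (fstep \<rho>) p (replicate k 1 @ replicate (length s - k) (-1)))"
proof (induction s arbitrary: k p)
  case Nil then show ?case by (simp add: ones_def)
next
  case (Cons u s)
  have mo: "mono \<rho>" using assms by (simp add: growth_function_def)
  have kle: "ones s \<le> length s" by (simp add: ones_def)
  show ?case
  proof (cases "u = 1")
    case True
    then have k: "k = Suc (ones s)" using Cons.prems by (simp add: ones_def)
    show ?thesis using Cons.IH[of "ones s" "fstep \<rho> p 1"] Cons.prems True k by simp
  next
    case False
    then have u: "u = -1" using Cons.prems by auto
    have k: "k = ones s" using Cons.prems u by (simp add: ones_def)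
    show ?thesis
    proof (cases "k = 0")
      case True
      then have "s = replicate (length s) (-1)" using all_neg Cons.prems k by auto
      then have "u # s = replicate (length (u#s) - k) (-1)" using u True by simp
      then show ?thesis using True by simp
    next
      case False
      obtain a b where p: "p = (a,b)" by (cases p)
      define r where "r = replicate (length s - k) (-1::int)"
      have IH: "fst (foldl (fstep \<rho>) (fstep \<rho> p (-1)) s) \<le> fst (foldl (fstep \<rho>) (fstep \<rho> p (-1)) (replicate k 1 @ r))
        \<and> snd (foldl (fstep \<rho>) (fstep \<rho> p (-1)) s) = snd (foldl (fstep \<rho>) (fstep \<rho> p (-1)) (replicate k 1 @ r))"
        using Cons.IH[of k "fstep \<rho> p (-1)"] Cons.prems k r_def by simp
      have len: "length (u#s) - k = Suc (length s - k)" using kle k by simp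
      have "\<rho> (a+b) \<le> \<rho> (a + real k + (b + real k))" using mo by (simp add: monoD)
      then have cmp: "fst (foldl (fstep \<rho>) (a + \<rho> (a+b) + real k, b - 1 + real k) r)
          \<le> fst (foldl (fstep \<rho>) (a + real k + \<rho> (a + real k + (b + real k)), b + real k - 1) r)
        \<and> snd (foldl (fstep \<rho>) (a + \<rho> (a+b) + real k, b - 1 + real k) r)
          = snd (foldl (fstep \<rho>) (a + real k + \<rho> (a + real k + (b + real k)), b + real k - 1) r)"
        using F_mono[OF mo, of "a + \<rho> (a+b) + real k" "a + real k + \<rho> (a + real k + (b + real k))" "b - 1 + real k" r]
        by (simp add: algebra_simps)
      have e1: "foldl (fstep \<rho>) (fstep \<rho> p (-1)) (replicate k 1 @ r)
          = foldl (fstep \<rho>) (a + \<rho> (a+b) + real k, b - 1 + real k) r"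
        by (simp add: p F_ones fstep_def)
      have e2: "foldl (fstep \<rho>) p (replicate k 1 @ replicate (length (u#s) - k) (-1))
          = foldl (fstep \<rho>) (a + real k + \<rho> (a + real k + (b + real k)), b + real k - 1) r"
        unfolding len r_def by (simp add: p F_ones fstep_def)
      have e3: "foldl (fstep \<rho>) p (u#s) = foldl (fstep \<rho>) (fstep \<rho> p (-1)) s" using u by simp
      show ?thesis unfolding e2 e3 using IH cmp unfolding e1 by linarith
    qed
  qed
qed

theorem mainTheorem17:
  fixes \<rho> :: "real \<Rightarrow> real" and m k :: nat and \<sigma> :: "int list"
  assumes "growth_function \<rho>"
    and "m \<ge> 1" and "k \<le> m"
    and "binary_string \<sigma>" and "length \<sigma> = m" and "ones \<sigma> = k"
  shows "fst (f_rho \<rho> \<sigma>) \<le> fst (f_rho \<rho> (replicate k 1 @ replicate (m - k) (-1)))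
       \<and> snd (f_rho \<rho> \<sigma>) = snd (f_rho \<rho> (replicate k 1 @ replicate (m - k) (-1)))"
  using main_gen[OF assms(1), of \<sigma> k "(0,0)"] assms unfolding f_rho_def binary_string_def by simp

end
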